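(* Let $\alpha=(a_1,\dots,a_w)$ have $m$ nonempty horizontal lists, and let $a_i\in\mathbb{L}^m_\alpha$. Let $(a_{i_{m-1}},\dots,a_{i_0})$, with $a_{i_0}=a_i$, be any increasing subsequence of $\alpha$ of length $m$ ending at $a_i$. Then $$\mathrm{pos}(lm^{m-1}_\alpha(a_i))\le i_{m-1}\le \mathrm{pos}(un^{m-1}_\alpha(a_i)).$$ Consequently, among the longest increasing subsequences ending at $a_i$, maximum width is attained by one starting at $lm^{m-1}_\alpha(a_i)$, and minimum width by one starting at $un^{m-1}_\alpha(a_i)$.
   Context: Let $\alpha=(a_1,\dots,a_w)$ be a finite sequence of real numbers, with items identified by their positions; $\mathrm{pos}(a_j)=j$. Increasing subsequences are non-strict. $a_j$ is compatible with $a_i$ if $j<i$ and $a_j\le a_i$. $RL_\alpha(a)$ is the maximum length of an increasing subsequence ending at $a$. $a_j$ is a predecessor of $a_i$ if it is compatible with $a_i$ and $RL_\alpha(a_j)=RL_\alpha(a_i)-1$. The horizontal list $\mathbb{L}^t_\alpha$ is the list of items with rising length $t$, ordered by position. The up neighbor $un_\alpha(a_i)$ is the item $a_j$ with the largest $j<i$ and $RL_\alpha(a_j)=RL_\alpha(a_i)-1$. The leftmost child $lm_\alpha(a_i)$ is the predecessor of $a_i$ with smallest position. Iterates are defined by $f^0(a)=a$ and $f^k=f\circ f^{k-1}$. The width of a subsequence $(a_{j_1},\dots,a_{j_k})$ is $j_k-j_1$. *)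

theory Defs
  imports Complex_Main
begin

text \<open>A sequence alpha = (a_1,...,a_w) is a function a :: nat => real together
  with its length w; items are identified by positions 1..w.\<close>

definition inc_subseq :: "(nat \<Rightarrow> real) \<Rightarrow> nat \<Rightarrow> nat list \<Rightarrow> bool" where
  "inc_subseq a w js \<longleftrightarrow> js \<noteq> [] \<and> set js \<subseteq> {1..w} \<and> sorted_wrt (<) js
     \<and> (\<forall>k. Suc k < length js \<longrightarrow> a (js ! k) \<le> a (js ! Suc k))"

definition RL :: "(nat \<Rightarrow> real) \<Rightarrow> nat \<Rightarrow> nat \<Rightarrow> nat" where
  "RL a w i = Max {length js | js. inc_subseq a w js \<and> last js = i}"

definition compatible :: "(nat \<Rightarrow> real) \<Rightarrow> nat \<Rightarrow> nat \<Rightarrow> bool" where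
  "compatible a j i \<longleftrightarrow> j < i \<and> a j \<le> a i"

definition predecessor :: "(nat \<Rightarrow> real) \<Rightarrow> nat \<Rightarrow> nat \<Rightarrow> nat \<Rightarrow> bool" where
  "predecessor a w j i \<longleftrightarrow> j \<in> {1..w} \<and> compatible a j i \<and> RL a w j + 1 = RL a w i"

definition hlist :: "(nat \<Rightarrow> real) \<Rightarrow> nat \<Rightarrow> nat \<Rightarrow> nat list" where
  "hlist a w t = filter (\<lambda>j. RL a w j = t) [1..<Suc w]"

definition un :: "(nat \<Rightarrow> real) \<Rightarrow> nat \<Rightarrow> nat \<Rightarrow> nat" where
  "un a w i = (GREATEST j. j \<in> {1..w} \<and> j < i \<and> RL a w j + 1 = RL a w i)"

definition lm :: "(nat \<Rightarrow> real) \<Rightarrow> nat \<Rightarrow> nat \<Rightarrow> nat" where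
  "lm a w i = (LEAST j. predecessor a w j i)"

definition width :: "nat list \<Rightarrow> nat" where
  "width js = last js - hd js"

end

theory Submission
  imports Defs
begin

context
  fixes a :: "nat \<Rightarrow> real" and w :: nat
begin

lemma nthmem: "set js \<subseteq> {1..w} \<Longrightarrow> k < length js \<Longrightarrow> js ! k \<in> {1..w}"
  by (metis nth_mem subsetD)

lemma inc_len_le: assumes "inc_subseq a w js" shows "length js \<le> w"
proof -
  have d: "distinct js" using assms unfolding inc_subseq_def by (simp add: strict_sorted_iff)
  have "length js = card (set js)" using d by (simp add: distinct_card)
  also have "\<dots> \<le> card {1..w}" using assms unfolding inc_subseq_def by (intro card_mono) auto
  finally show ?thesis by simp
qed

lemma RL_fin: "finite {length js | js. inc_subseq a w js \<and> last js = j}"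
  by (rule finite_subset[of _ "{..w}"]) (auto dest: inc_len_le)

lemma RL_ge: "inc_subseq a w js \<Longrightarrow> last js = j \<Longrightarrow> length js \<le> RL a w j"
  unfolding RL_def by (rule Max_ge[OF RL_fin]) auto

lemma single_inc: "j \<in> {1..w} \<Longrightarrow> inc_subseq a w [j]"
  unfolding inc_subseq_def by auto

lemma RL_ex: assumes "j \<in> {1..w}"
  shows "\<exists>js. inc_subseq a w js \<and> last js = j \<and> length js = RL a w j"
proof -
  have "{length js | js. inc_subseq a w js \<and> last js = j} \<noteq> {}"
    using single_inc[OF assms] by force
  from Max_in[OF RL_fin this] show ?thesis unfolding RL_def by auto
qed

lemma RL_pos: "j \<in> {1..w} \<Longrightarrow> 1 \<le> RL a w j"
  using RL_ge[OF single_inc, of j j] by simp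

lemma le_last: fixes js :: "nat list" assumes "sorted_wrt (<) js" "x \<in> set js" shows "x \<le> last js"
proof -
  obtain p where p: "p < length js" "x = js ! p" using assms(2) by (auto simp: in_set_conv_nth)
  have "js \<noteq> []" using assms(2) by auto
  hence l: "last js = js ! (length js - 1)" by (simp add: last_conv_nth)
  show ?thesis
  proof (cases "p = length js - 1")
    case True thus ?thesis using p l by simp
  next
    case False
    hence "js ! p < js ! (length js - 1)"
      using p sorted_wrt_nth_less[OF assms(1), of p "length js - 1"] by simp
    thus ?thesis using p l by simp
  qed
qed

lemma extend: assumes "inc_subseq a w js" "last js = j" "j < i" "a j \<le> a i" "i \<in> {1..w}"
  shows "inc_subseq a w (js @ [i])"
proof -
  have ne: "js \<noteq> []" and s: "set js \<subseteq> {1..w}" and so: "sorted_wrt (<) js"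
    and v: "\<forall>k. Suc k < length js \<longrightarrow> a (js ! k) \<le> a (js ! Suc k)"
    using assms(1) unfolding inc_subseq_def by auto
  have "sorted_wrt (<) (js @ [i])"
    using so le_last[OF so] assms(2,3) by (force simp: sorted_wrt_append)
  moreover have "\<forall>k. Suc k < length (js@[i]) \<longrightarrow> a ((js@[i]) ! k) \<le> a ((js@[i]) ! Suc k)"
  proof (intro allI impI)
    fix k assume k: "Suc k < length (js @ [i])"
    show "a ((js@[i]) ! k) \<le> a ((js@[i]) ! Suc k)"
    proof (cases "Suc k < length js")
      case True thus ?thesis using v by (simp add: nth_append)
    next
      case False
      hence "k = length js - 1" using k by simp
      thus ?thesis using assms(2,4) ne by (simp add: nth_append last_conv_nth)
    qed
  qed
  ultimately show ?thesis using ne s assms(5) unfolding inc_subseq_def by auto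
qed

lemma RL_compat: assumes "j \<in> {1..w}" "i \<in> {1..w}" "j < i" "a j \<le> a i"
  shows "RL a w j < RL a w i"
proof -
  obtain js where js: "inc_subseq a w js" "last js = j" "length js = RL a w j"
    using RL_ex[OF assms(1)] by blast
  have "length (js @ [i]) \<le> RL a w i" using RL_ge[OF extend[OF js(1,2) assms(3,4,2)]] by simp
  thus ?thesis using js by simp
qed

lemma RL_same: assumes "j \<in> {1..w}" "i \<in> {1..w}" "j < i" "RL a w j = RL a w i"
  shows "a i < a j"
  using RL_compat[OF assms(1-3)] assms(4) by force

lemma chain_RL: assumes "inc_subseq a w js" "p + d < length js"
  shows "RL a w (js ! p) + d \<le> RL a w (js ! (p + d))"
  using assms(2)
proof (induction d)
  case 0 thus ?case by simp
next
  case (Suc d)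
  have s: "set js \<subseteq> {1..w}" and so: "sorted_wrt (<) js"
    and v: "\<forall>k. Suc k < length js \<longrightarrow> a (js ! k) \<le> a (js ! Suc k)"
    using assms(1) unfolding inc_subseq_def by auto
  have m1: "js ! (p+d) \<in> {1..w}" "js ! Suc (p+d) \<in> {1..w}" using nthmem[OF s, of "p+d"] nthmem[OF s, of "Suc (p+d)"] Suc.prems
    by auto
  have "js ! (p+d) < js ! Suc (p+d)" using sorted_wrt_nth_less[OF so, of "p+d" "Suc (p+d)"] Suc.prems by simp
  moreover have "a (js ! (p+d)) \<le> a (js ! Suc (p+d))" using v Suc.prems by simp
  ultimately have "RL a w (js ! (p+d)) < RL a w (js ! Suc (p+d))"
    using RL_compat m1 by blast
  thus ?case using Suc by simp
qed

lemma RL_exact: assumes "inc_subseq a w js" "length js = RL a w (last js)" "p < length js"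
  shows "RL a w (js ! p) = Suc p"
proof -
  have s: "set js \<subseteq> {1..w}" using assms(1) unfolding inc_subseq_def by auto
  have "1 \<le> RL a w (js ! 0)" using s assms(3) by (intro RL_pos nthmem) auto
  moreover have "RL a w (js ! 0) + p \<le> RL a w (js ! (0 + p))" using chain_RL[OF assms(1), of 0 p] assms(3) by simp
  moreover have "RL a w (js ! p) + (length js - 1 - p) \<le> RL a w (js ! (p + (length js - 1 - p)))"
    using chain_RL[OF assms(1), of p "length js - 1 - p"] assms(3) by simp
  moreover have "js ! (p + (length js - 1 - p)) = last js" using assms(3)
    by (subst last_conv_nth) auto
  ultimately show ?thesis using assms(2,3) by simp
qed

lemma pred_ex: assumes "x \<in> {1..w}" "2 \<le> RL a w x"
  shows "\<exists>q. predecessor a w q x"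
proof -
  obtain js where js: "inc_subseq a w js" "last js = x" "length js = RL a w x"
    using RL_ex[OF assms(1)] by blast
  define r where "r = RL a w x"
  have s: "set js \<subseteq> {1..w}" and so: "sorted_wrt (<) js"
    and v: "\<forall>k. Suc k < length js \<longrightarrow> a (js ! k) \<le> a (js ! Suc k)"
    using js(1) unfolding inc_subseq_def by auto
  have lx: "js ! (r - 1) = x" using js assms(2) r_def
    by (metis last_conv_nth list.size(3) not_numeral_le_zero)
  have q1: "js ! (r-2) \<in> {1..w}" using nthmem[OF s, of "r-2"] js(3) assms(2) r_def by auto
  have "RL a w (js ! (r-2)) = Suc (r-2)" using RL_exact[OF js(1)] js assms(2) r_def by simp
  moreover have "js ! (r-2) < js ! (r-1)" using sorted_wrt_nth_less[OF so, of "r-2" "r-1"] js(3) assms(2) r_def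
    by simp
  moreover have "a (js ! (r-2)) \<le> a (js ! Suc (r-2))" using v js(3) assms(2) r_def by simp
  moreover have "Suc (r-2) = r - 1" using assms(2) r_def by simp
  ultimately show ?thesis using q1 lx assms(2) r_def unfolding predecessor_def compatible_def
    by (intro exI[of _ "js ! (r-2)"]) auto
qed

lemma lm_pred: "x \<in> {1..w} \<Longrightarrow> 2 \<le> RL a w x \<Longrightarrow> predecessor a w (lm a w x) x"
proof -
  assume "x \<in> {1..w}" "2 \<le> RL a w x"
  then obtain q where "predecessor a w q x" using pred_ex by blast
  thus ?thesis unfolding lm_def by (rule LeastI)
qed

lemma lm_le: "predecessor a w q x \<Longrightarrow> lm a w x \<le> q"
  unfolding lm_def by (rule Least_le)

lemma un_prop: assumes "x \<in> {1..w}" "2 \<le> RL a w x"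
  shows "un a w x \<in> {1..w} \<and> un a w x < x \<and> RL a w (un a w x) + 1 = RL a w x"
    and "\<And>q. q \<in> {1..w} \<Longrightarrow> q < x \<Longrightarrow> RL a w q + 1 = RL a w x \<Longrightarrow> q \<le> un a w x"
proof -
  obtain p where p: "predecessor a w p x" using pred_ex[OF assms] by blast
  hence P: "p \<in> {1..w} \<and> p < x \<and> RL a w p + 1 = RL a w x"
    unfolding predecessor_def compatible_def by auto
  show "un a w x \<in> {1..w} \<and> un a w x < x \<and> RL a w (un a w x) + 1 = RL a w x"
    unfolding un_def
    by (rule GreatestI_nat[where P="\<lambda>j. j \<in> {1..w} \<and> j < x \<and> RL a w j + 1 = RL a w x" and k=p and b=x, OF P]) simp
  fix q assume "q \<in> {1..w}" "q < x" "RL a w q + 1 = RL a w x"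
  hence Q: "q \<in> {1..w} \<and> q < x \<and> RL a w q + 1 = RL a w x" by simp
  show "q \<le> un a w x"
    unfolding un_def
    by (rule Greatest_le_nat[where P="\<lambda>j. j \<in> {1..w} \<and> j < x \<and> RL a w j + 1 = RL a w x" and k=q and b=x, OF Q]) simp
qed

lemma un_pred: assumes "x \<in> {1..w}" "2 \<le> RL a w x"
  shows "predecessor a w (un a w x) x"
proof -
  obtain p where p: "predecessor a w p x" using pred_ex[OF assms] by blast
  hence P: "p \<in> {1..w}" "p < x" "RL a w p + 1 = RL a w x" "a p \<le> a x"
    unfolding predecessor_def compatible_def by auto
  note U = un_prop[OF assms]
  have "p \<le> un a w x" using U(2)[OF P(1-3)] .
  hence "a (un a w x) \<le> a x"
  proof (cases "p = un a w x")
    case True thus ?thesis using P by simp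
  next
    case False
    hence "p < un a w x" using \<open>p \<le> un a w x\<close> by simp
    hence "a (un a w x) < a p" using RL_same[OF P(1)] U(1) P(3) by auto
    thus ?thesis using P by simp
  qed
  thus ?thesis using U(1) unfolding predecessor_def compatible_def by auto
qed

lemma iter_RL:
  assumes hf: "\<And>x. x \<in> {1..w} \<Longrightarrow> 2 \<le> RL a w x \<Longrightarrow> predecessor a w (f x) x"
    and i: "i \<in> {1..w}"
  shows "k < RL a w i \<Longrightarrow> (f ^^ k) i \<in> {1..w} \<and> RL a w ((f ^^ k) i) + k = RL a w i"
proof (induction k)
  case 0 thus ?case using i by simp
next
  case (Suc k)
  let ?z = "(f ^^ k) i"
  have z: "?z \<in> {1..w}" "RL a w ?z + k = RL a w i" using Suc by auto
  hence "predecessor a w (f ?z) ?z" using Suc.prems by (intro hf) auto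
  thus ?case using z unfolding predecessor_def by auto
qed

lemma iter_seq:
  assumes hf: "\<And>x. x \<in> {1..w} \<Longrightarrow> 2 \<le> RL a w x \<Longrightarrow> predecessor a w (f x) x"
    and i: "i \<in> {1..w}" and m: "m = RL a w i"
  defines "cs \<equiv> map (\<lambda>k. (f ^^ (m - 1 - k)) i) [0..<m]"
  shows "inc_subseq a w cs \<and> length cs = m \<and> last cs = i \<and> hd cs = (f ^^ (m - 1)) i"
proof -
  have m1: "1 \<le> m" using RL_pos[OF i] m by simp
  note IT = iter_RL[OF hf i]
  have len: "length cs = m" unfolding cs_def by simp
  have ne: "cs \<noteq> []" using m1 len by auto
  have last: "last cs = i" using ne len m1 unfolding cs_def by (simp add: last_conv_nth)
  have hd: "hd cs = (f ^^ (m - 1)) i" using m1 unfolding cs_def by (simp add: hd_map upt_conv_Cons)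
  have set: "set cs \<subseteq> {1..w}" unfolding cs_def using IT m by auto
  have step: "cs ! k < cs ! Suc k \<and> a (cs ! k) \<le> a (cs ! Suc k)" if k: "Suc k < length cs" for k
  proof -
    let ?z = "(f ^^ (m - 2 - k)) i"
    have e1: "cs ! Suc k = ?z" using k len unfolding cs_def by simp
    have "cs ! k = (f ^^ Suc (m - 2 - k)) i" using k len unfolding cs_def
      by (simp add: Suc_diff_Suc numeral_2_eq_2)
    hence e2: "cs ! k = f ?z" by simp
    have z: "?z \<in> {1..w}" "RL a w ?z + (m - 2 - k) = m" using IT[of "m-2-k"] m k len by auto
    have "predecessor a w (f ?z) ?z" using z k len by (intro hf) auto
    thus ?thesis using e1 e2 unfolding predecessor_def compatible_def by auto
  qed
  have "sorted_wrt (<) cs"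
    using step by (subst sorted_wrt_iff_nth_Suc_transp) (auto intro: transpI)
  thus ?thesis using ne set step len last hd unfolding inc_subseq_def by auto
qed

end

theorem mainTheorem11:
  fixes a :: "nat \<Rightarrow> real" and w m i :: nat
  assumes "card {t. hlist a w t \<noteq> []} = m"
    and "i \<in> set (hlist a w m)"
  shows "(\<forall>js. inc_subseq a w js \<and> length js = m \<and> last js = i \<longrightarrow>
            (lm a w ^^ (m - 1)) i \<le> hd js \<and> hd js \<le> (un a w ^^ (m - 1)) i)
    \<and> (\<exists>js. inc_subseq a w js \<and> length js = m \<and> last js = i \<and>
            hd js = (lm a w ^^ (m - 1)) i \<and>
            (\<forall>ks. inc_subseq a w ks \<and> length ks = m \<and> last ks = i \<longrightarrow> width ks \<le> width js))
    \<and> (\<exists>js. inc_subseq a w js \<and> length js = m \<and> last js = i \<and>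
            hd js = (un a w ^^ (m - 1)) i \<and>
            (\<forall>ks. inc_subseq a w ks \<and> length ks = m \<and> last ks = i \<longrightarrow> width js \<le> width ks))"
proof -
  have iw: "i \<in> {1..w}" and Ri: "RL a w i = m" using assms(2) unfolding hlist_def by auto
  have m1: "1 \<le> m" using RL_pos[where a=a, OF iw] Ri by simp
  have hl: "\<And>x. x \<in> {1..w} \<Longrightarrow> 2 \<le> RL a w x \<Longrightarrow> predecessor a w (lm a w x) x"
    by (rule lm_pred)
  have hu: "\<And>x. x \<in> {1..w} \<Longrightarrow> 2 \<le> RL a w x \<Longrightarrow> predecessor a w (un a w x) x"
    by (rule un_pred)
  note ITL = iter_RL[of w a "lm a w", OF hl iw]
  note ITU = iter_RL[of w a "un a w", OF hu iw]
  have bounds: "(lm a w ^^ (m-1)) i \<le> hd js \<and> hd js \<le> (un a w ^^ (m-1)) i"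
    if js: "inc_subseq a w js" "length js = m" "last js = i" for js
  proof -
    define j where "j k = js ! (m - 1 - k)" for k
    have s: "set js \<subseteq> {1..w}" and so: "sorted_wrt (<) js"
      and v: "\<forall>k. Suc k < length js \<longrightarrow> a (js ! k) \<le> a (js ! Suc k)"
      using js(1) unfolding inc_subseq_def by auto
    have RLj: "RL a w (j k) + k = m" if "k < m" for k
    proof -
      have "RL a w (js ! (m-1-k)) = Suc (m-1-k)"
        using RL_exact[OF js(1)] js(2,3) Ri that by simp
      thus ?thesis using that unfolding j_def by simp
    qed
    have jmem: "j k \<in> {1..w}" if "k < m" for k
      using nthmem[OF s, of "m-1-k"] that js(2) unfolding j_def by simp
    have jstep: "j (Suc k) < j k \<and> a (j (Suc k)) \<le> a (j k)" if k: "Suc k < m" for k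
    proof -
      have e: "m - 1 - k = Suc (m - 1 - Suc k)" using k by simp
      have "js ! (m - 1 - Suc k) < js ! Suc (m - 1 - Suc k)"
        using sorted_wrt_nth_less[OF so, of "m - 1 - Suc k" "Suc (m - 1 - Suc k)"] k js(2) by simp
      moreover have "a (js ! (m - 1 - Suc k)) \<le> a (js ! Suc (m - 1 - Suc k))"
        using v k js(2) by simp
      ultimately show ?thesis unfolding j_def e by simp
    qed
    have j0: "j 0 = i" using js(2,3) m1 last_conv_nth[of js] unfolding j_def by (cases "js = []") auto
    have L: "k < m \<Longrightarrow> (lm a w ^^ k) i \<le> j k" for k
    proof (induction k)
      case 0 thus ?case using j0 by simp
    next
      case (Suc k)
      let ?x = "(lm a w ^^ k) i"
      have IH: "?x \<le> j k" using Suc by simp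
      have x: "?x \<in> {1..w}" "RL a w ?x + k = m" using ITL[of k] Suc.prems Ri by auto
      have x2: "2 \<le> RL a w ?x" using x Suc.prems by simp
      have ax: "a (j k) \<le> a ?x"
      proof (cases "?x = j k")
        case True thus ?thesis by simp
      next
        case False
        hence "?x < j k" using IH by simp
        hence "a (j k) < a ?x" using RL_same[where a=a, OF x(1) jmem[of k]] RLj[of k] x(2) Suc.prems by simp
        thus ?thesis by simp
      qed
      have P: "predecessor a w (lm a w ?x) ?x" using hl[OF x(1) x2] .
      have "lm a w ?x \<le> j (Suc k)"
      proof (cases "j (Suc k) < ?x")
        case True
        have "predecessor a w (j (Suc k)) ?x"
          unfolding predecessor_def compatible_def
          using True jmem[OF Suc.prems] jstep[OF Suc.prems] ax RLj[OF Suc.prems] x(2) by auto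
        thus ?thesis by (rule lm_le)
      next
        case False
        thus ?thesis using P unfolding predecessor_def compatible_def by auto
      qed
      thus ?case by simp
    qed
    have U: "k < m \<Longrightarrow> j k \<le> (un a w ^^ k) i" for k
    proof (induction k)
      case 0 thus ?case using j0 by simp
    next
      case (Suc k)
      let ?y = "(un a w ^^ k) i"
      have IH: "j k \<le> ?y" using Suc by simp
      have y: "?y \<in> {1..w}" "RL a w ?y + k = m" using ITU[of k] Suc.prems Ri by auto
      have y2: "2 \<le> RL a w ?y" using y Suc.prems by simp
      have "j (Suc k) \<le> un a w ?y"
        using un_prop(2)[OF y(1) y2, of "j (Suc k)"] jmem[OF Suc.prems] jstep[OF Suc.prems]
          IH RLj[OF Suc.prems] y(2) by simp
      thus ?case by simp
    qed
    have "hd js = j (m - 1)" using js(2) m1 hd_conv_nth[of js] unfolding j_def by (cases "js = []") auto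
    thus ?thesis using L[of "m-1"] U[of "m-1"] m1 by simp
  qed
  obtain cl where cl: "inc_subseq a w cl" "length cl = m" "last cl = i" "hd cl = (lm a w ^^ (m - 1)) i"
    using iter_seq[of w a "lm a w", OF hl iw Ri[symmetric]] by blast
  obtain cu where cu: "inc_subseq a w cu" "length cu = m" "last cu = i" "hd cu = (un a w ^^ (m - 1)) i"
    using iter_seq[of w a "un a w", OF hu iw Ri[symmetric]] by blast
  have "\<forall>ks. inc_subseq a w ks \<and> length ks = m \<and> last ks = i \<longrightarrow> width ks \<le> width cl"
    using bounds cl unfolding width_def by (auto intro: diff_le_mono2)
  moreover have "\<forall>ks. inc_subseq a w ks \<and> length ks = m \<and> last ks = i \<longrightarrow> width cu \<le> width ks"
    using bounds cu unfolding width_def by (auto intro: diff_le_mono2)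
  ultimately show ?thesis using bounds cl cu by blast
qed

end
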